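(* Let $\|\cdot\|$ be a norm on $\mathbb{R}^d$, let $\Phi$ be a mirror map whose Bregman divergence satisfies $\frac{m}{2}\|x-y\|^2\le D_\Phi(x,y)\le\frac{M}{2}\|x-y\|^2$ for constants $0<m\le M$, let $f_t$ be a convex function and $x_{t-1}$ a point. For each $l$ with $K_l=\{x: f_t(x)\le l\}$ nonempty, let $x(l)=\Pi^\Phi_{K_l}(x_{t-1})$. Then the function $g(l)=\|x(l)-x_{t-1}\|$ is continuous in $l$.
   Context: For a convex function $\Phi$, the Bregman divergence is $D_\Phi(x,y)=\Phi(x)-\Phi(y)-\nabla\Phi(y)^T(x-y)$, and the Bregman projection of $x$ onto a convex set $K$ is $\Pi^\Phi_K(x)=\arg\min_{y\in K}D_\Phi(y,x)$. *)

theory Defs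
  imports "HOL-Analysis.Analysis"
begin

definition bregman :: "('a::euclidean_space \<Rightarrow> real) \<Rightarrow> 'a \<Rightarrow> 'a \<Rightarrow> real" where
  "bregman Phi x y = Phi x - Phi y - frechet_derivative Phi (at y) (x - y)"

definition bregman_proj :: "('a::euclidean_space \<Rightarrow> real) \<Rightarrow> 'a set \<Rightarrow> 'a \<Rightarrow> 'a" where
  "bregman_proj Phi K x = arg_min_on (\<lambda>y. bregman Phi y x) K"

definition is_norm :: "('a::real_vector \<Rightarrow> real) \<Rightarrow> bool" where
  "is_norm N \<longleftrightarrow> (\<forall>x. N x = 0 \<longleftrightarrow> x = 0) \<and> (\<forall>c x. N (c *\<^sub>R x) = \<bar>c\<bar> * N x)
     \<and> (\<forall>x y. N (x + y) \<le> N x + N y)"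

end

theory Submission imports Defs begin

lemma nrm_basic:
  assumes "is_norm N"
  shows "N 0 = 0" "N (- x) = N x" "N x \<ge> 0" "N (a - b) \<le> N (a - c) + N (c - b)"
    "\<bar>N a - N b\<bar> \<le> N (a - b)"
proof -
  have h: "\<And>c x. N (c *\<^sub>R x) = \<bar>c\<bar> * N x" and t: "\<And>x y. N (x + y) \<le> N x + N y"
    using assms unfolding is_norm_def by auto
  show z: "N 0 = 0" using h[of 0 0] by simp
  show n: "N (- x) = N x" for x using h[of "-1" x] by simp
  show p: "N x \<ge> 0" for x using t[of x "-x"] n[of x] z by simp
  show "N (a - b) \<le> N (a - c) + N (c - b)" using t[of "a - c" "c - b"] by simp
  have "N a \<le> N (a - b) + N b" using t[of "a-b" b] by simp
  moreover have "N b \<le> N (a - b) + N a"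
  proof -
    have "N b \<le> N a + N (b - a)" using t[of a "b - a"] by simp
    moreover have "N (b - a) = N (a - b)" using n[of "a - b"] by simp
    ultimately show ?thesis by simp
  qed
  ultimately show "\<bar>N a - N b\<bar> \<le> N (a - b)" by linarith
qed

lemma nrm_sum:
  assumes "is_norm N"
  shows "N (sum g S) \<le> (\<Sum>i\<in>S. N (g i))"
proof (induction S rule: infinite_finite_induct)
  case (infinite A) then show ?case using nrm_basic[OF assms] by simp
next
  case empty then show ?case using nrm_basic[OF assms] by simp
next
  case (insert x F)
  have "N (g x + sum g F) \<le> N (g x) + N (sum g F)" using assms unfolding is_norm_def by auto
  then show ?case using insert by simp
qed

lemma nrm_upper:
  fixes N :: "'a::euclidean_space \<Rightarrow> real"
  assumes "is_norm N"
  shows "\<exists>B. \<forall>x. N x \<le> B * norm x"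
proof -
  have h: "\<And>c x. N (c *\<^sub>R x) = \<bar>c\<bar> * N x" using assms unfolding is_norm_def by auto
  have "N x \<le> (\<Sum>b\<in>Basis. N b) * norm x" for x
  proof -
    have "N x = N (\<Sum>b\<in>Basis. (x \<bullet> b) *\<^sub>R b)" by (simp add: euclidean_representation)
    also have "\<dots> \<le> (\<Sum>b\<in>Basis. N ((x \<bullet> b) *\<^sub>R b))" by (rule nrm_sum[OF assms])
    also have "\<dots> = (\<Sum>b\<in>Basis. \<bar>x \<bullet> b\<bar> * N b)" by (simp add: h)
    also have "\<dots> \<le> (\<Sum>b\<in>Basis. norm x * N b)"
      by (rule sum_mono) (simp add: Basis_le_norm mult_right_mono nrm_basic(3)[OF assms])
    finally show ?thesis by (simp add: sum_distrib_left mult.commute)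
  qed
  then show ?thesis by blast
qed

lemma nrm_cont:
  fixes N :: "'a::euclidean_space \<Rightarrow> real"
  assumes "is_norm N"
  shows "continuous_on S N"
proof -
  obtain B where B: "\<And>x. N x \<le> B * norm x" using nrm_upper[OF assms] by blast
  have "B \<ge> 0"
  proof -
    obtain b :: 'a where "b \<in> Basis" using nonempty_Basis by blast
    hence "b \<noteq> 0" by auto
    hence "N b > 0" using assms nrm_basic(3)[OF assms, of b] unfolding is_norm_def
      by (metis order_le_less)
    then show ?thesis using B[of b] \<open>b \<noteq> 0\<close>
      by (smt (verit, best) mult_nonpos_nonneg norm_ge_zero)
  qed
  show ?thesis unfolding continuous_on_iff
  proof (intro ballI allI impI)
    fix x e assume "x \<in> S" "(e::real) > 0"
    show "\<exists>d>0. \<forall>x'\<in>S. dist x' x < d \<longrightarrow> dist (N x') (N x) < e"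
    proof (intro exI[of _ "e / (B + 1)"] conjI ballI impI)
      show "e / (B + 1) > 0" using \<open>e > 0\<close> \<open>B \<ge> 0\<close> by simp
      fix x' assume "x' \<in> S" "dist x' x < e / (B + 1)"
      hence "norm (x' - x) * (B + 1) < e" using \<open>B \<ge> 0\<close> by (simp add: dist_norm field_simps)
      moreover have "dist (N x') (N x) \<le> B * norm (x' - x)"
        using nrm_basic(5)[OF assms, of x' x] B[of "x' - x"] by (simp add: dist_real_def)
      moreover have "B * norm (x' - x) \<le> norm (x' - x) * (B + 1)" by (simp add: algebra_simps)
      ultimately show "dist (N x') (N x) < e" by linarith
    qed
  qed
qed

lemma nrm_lower:
  fixes N :: "'a::euclidean_space \<Rightarrow> real"
  assumes "is_norm N"
  shows "\<exists>c>0. \<forall>x. c * norm x \<le> N x"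
proof -
  have ne: "sphere (0::'a) 1 \<noteq> {}" by simp
  obtain u where u: "u \<in> sphere (0::'a) 1" "\<And>y. y \<in> sphere 0 1 \<Longrightarrow> N u \<le> N y"
    using continuous_attains_inf[OF compact_sphere ne nrm_cont[OF assms]] by blast
  have "u \<noteq> 0" using u(1) by auto
  hence cpos: "N u > 0" using assms nrm_basic(3)[OF assms, of u] unfolding is_norm_def
    by (metis order_le_less)
  have h: "\<And>c x. N (c *\<^sub>R x) = \<bar>c\<bar> * N x" using assms unfolding is_norm_def by auto
  have "N u * norm x \<le> N x" for x
  proof (cases "x = 0")
    case True then show ?thesis using nrm_basic(1)[OF assms] by simp
  next
    case False
    have "N u \<le> N ((1 / norm x) *\<^sub>R x)" using u(2) False by simp
    also have "\<dots> = N x / norm x" using h by simp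
    finally show ?thesis using False by (simp add: field_simps)
  qed
  then show ?thesis using cpos by blast
qed

lemma main_abs:
  fixes D f :: "'a::euclidean_space \<Rightarrow> real" and N :: "'a \<Rightarrow> real"
  assumes N: "is_norm N" and m: "m > 0"
    and Dc: "continuous_on UNIV D"
    and coer: "\<And>y. m / 2 * (N (y - x0))\<^sup>2 \<le> D y"
    and mid: "\<And>y1 y2. D ((1/2) *\<^sub>R (y1 + y2)) \<le> (D y1 + D y2) / 2 - m / 8 * (N (y1 - y2))\<^sup>2"
    and fc: "convex_on UNIV f"
  shows "continuous_on {l. {x. f x \<le> l} \<noteq> {}} (\<lambda>l. N (arg_min_on D {x. f x \<le> l} - x0))"
proof -
  obtain c where c: "c > 0" "\<And>x. c * norm x \<le> N x" using nrm_lower[OF N] by blast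
  have fcont: "continuous_on UNIV f" using convex_on_continuous[OF open_UNIV fc] .
  note Nb = nrm_basic[OF N]
  define K where "K l = {x. f x \<le> l}" for l
  define P where "P l = arg_min_on D (K l)" for l
  define V where "V l = D (P l)" for l
  define Dom where "Dom = {l. K l \<noteq> {}}"
  have Kcl: "closed (K l)" for l unfolding K_def
    by (rule closed_Collect_le[OF fcont continuous_on_const])
  have cpt: "compact {y. D y \<le> C}" for C
  proof -
    have cl: "closed {y. D y \<le> C}" by (rule closed_Collect_le[OF Dc continuous_on_const])
    define R where "R = 2 * \<bar>C\<bar> / (m * c\<^sup>2) + 1"
    have "{y. D y \<le> C} \<subseteq> cball x0 R"
    proof
      fix y assume "y \<in> {y. D y \<le> C}"
      hence Dy: "D y \<le> C" by simp
      define n where "n = norm (y - x0)"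
      have n0: "n \<ge> 0" unfolding n_def by simp
      have "c * n \<le> N (y - x0)" unfolding n_def by (rule c(2))
      hence "(c * n)\<^sup>2 \<le> (N (y - x0))\<^sup>2" using c(1) n0 by (intro power_mono) auto
      hence "m / 2 * (c * n)\<^sup>2 \<le> m / 2 * (N (y - x0))\<^sup>2" using m
        by (intro mult_left_mono) auto
      hence "m / 2 * (c * n)\<^sup>2 \<le> C" using coer[of y] Dy by linarith
      hence A: "m * c\<^sup>2 * n\<^sup>2 \<le> 2 * \<bar>C\<bar>" by (simp add: power_mult_distrib field_simps)
      have mc: "m * c\<^sup>2 > 0" using m c(1) by simp
      have "n \<le> R"
      proof (rule ccontr)
        assume "\<not> n \<le> R"
        hence nR: "n > R" by simp
        have R1: "R \<ge> 1" unfolding R_def using mc by simp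
        hence "n\<^sup>2 \<ge> n" using nR by (simp add: power2_eq_square)
        hence "n\<^sup>2 > 2 * \<bar>C\<bar> / (m * c\<^sup>2)" using nR unfolding R_def by simp
        hence "m * c\<^sup>2 * n\<^sup>2 > 2 * \<bar>C\<bar>" using mc by (simp add: field_simps)
        then show False using A by simp
      qed
      then show "y \<in> cball x0 R" unfolding n_def by (simp add: dist_norm norm_minus_commute)
    qed
    hence "bounded {y. D y \<le> C}" using bounded_cball bounded_subset by blast
    then show ?thesis using cl compact_eq_bounded_closed by blast
  qed
  have ex: "P l \<in> K l \<and> (\<forall>y\<in>K l. V l \<le> D y)" if lD: "l \<in> Dom" for l
  proof -
    obtain w where w: "w \<in> K l" using lD unfolding Dom_def by blast
    define T where "T = K l \<inter> {y. D y \<le> D w}"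
    have "compact T" unfolding T_def using closed_Int_compact[OF Kcl cpt] .
    moreover have "T \<noteq> {}" using w unfolding T_def by auto
    ultimately obtain z where z: "z \<in> T" "\<And>y. y \<in> T \<Longrightarrow> D z \<le> D y"
      using continuous_attains_inf[of T D] continuous_on_subset[OF Dc] by blast
    have "is_arg_min D (\<lambda>x. x \<in> K l) z"
      unfolding is_arg_min_linorder
    proof (intro conjI allI impI)
      show "z \<in> K l" using z(1) unfolding T_def by simp
      fix y assume "y \<in> K l"
      show "D z \<le> D y"
      proof (cases "D y \<le> D w")
        case True then show ?thesis using z(2) \<open>y \<in> K l\<close> unfolding T_def by simp
      next
        case False then show ?thesis using z(1) unfolding T_def by simp
      qed
    qed
    hence "is_arg_min D (\<lambda>x. x \<in> K l) (P l)"
      unfolding P_def arg_min_on_def arg_min_def by (rule someI)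
    then show ?thesis unfolding is_arg_min_linorder V_def by simp
  qed
  have Kmid: "(1/2) *\<^sub>R (y1 + y2) \<in> K l" if "y1 \<in> K l" "y2 \<in> K l" for y1 y2 l
  proof -
    have "f ((1 - 1/2) *\<^sub>R y1 + (1/2) *\<^sub>R y2) \<le> (1 - 1/2) * f y1 + (1/2) * f y2"
      by (rule convex_onD[OF fc]) auto
    moreover have "(1 - 1/2) *\<^sub>R y1 + (1/2) *\<^sub>R y2 = (1/2) *\<^sub>R (y1 + y2)"
      by (simp add: scaleR_add_right)
    ultimately show ?thesis using that unfolding K_def by simp
  qed
  have growth: "V l + m / 4 * (N (y - P l))\<^sup>2 \<le> D y" if "l \<in> Dom" "y \<in> K l" for l y
  proof -
    have "(1/2) *\<^sub>R (P l + y) \<in> K l" using Kmid ex[OF that(1)] that(2) by blast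
    hence "V l \<le> D ((1/2) *\<^sub>R (P l + y))" using ex[OF that(1)] by blast
    moreover have "N (P l - y) = N (y - P l)" using Nb(2)[of "y - P l"] by simp
    ultimately show ?thesis using mid[of "P l" y] unfolding V_def by (simp add: field_simps)
  qed
  have mono: "l2 \<in> Dom \<and> V l2 + m / 4 * (N (P l1 - P l2))\<^sup>2 \<le> V l1"
    if "l1 \<in> Dom" "l1 \<le> l2" for l1 l2
  proof -
    have "P l1 \<in> K l2" using ex[OF that(1)] that(2) unfolding K_def by auto
    hence "l2 \<in> Dom" unfolding Dom_def by blast
    then show ?thesis using growth[OF \<open>l2 \<in> Dom\<close> \<open>P l1 \<in> K l2\<close>] unfolding V_def by simp
  qed
  have Vcont: "\<exists>d>0. \<forall>l'\<in>Dom. \<bar>l' - l\<bar> < d \<longrightarrow> \<bar>V l' - V l\<bar> < e"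
    if l: "l \<in> Dom" and e: "e > 0" for l e
  proof -
    have "\<exists>d1>0. \<forall>l'. l \<le> l' \<and> l' < l + d1 \<longrightarrow> V l - e < V l'"
    proof (cases "{y. D y \<le> V l - e} = {}")
      case True
      show ?thesis
        by (rule exI[of _ 1]) (use True in \<open>auto simp: V_def not_le\<close>)
    next
      case False
      define S where "S = {y. D y \<le> V l - e}"
      obtain ys where ys: "ys \<in> S" "\<And>y. y \<in> S \<Longrightarrow> f ys \<le> f y"
        using continuous_attains_inf[of S f] cpt[of "V l - e"] False continuous_on_subset[OF fcont]
        unfolding S_def by blast
      have "f ys > l"
      proof (rule ccontr)
        assume "\<not> f ys > l"
        hence "ys \<in> K l" unfolding K_def by simp
        hence "V l \<le> D ys" using ex[OF l] by blast
        then show False using ys(1) e unfolding S_def by simp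
      qed
      show ?thesis
      proof (intro exI[of _ "f ys - l"] conjI allI impI)
        show "f ys - l > 0" using \<open>f ys > l\<close> by simp
        fix l' assume l': "l \<le> l' \<and> l' < l + (f ys - l)"
        have "l' \<in> Dom" using mono[OF l] l' by blast
        have Pl': "f (P l') \<le> l'" using ex[OF \<open>l' \<in> Dom\<close>] unfolding K_def by simp
        show "V l - e < V l'"
        proof (rule ccontr)
          assume "\<not> V l - e < V l'"
          hence "P l' \<in> S" unfolding S_def V_def by simp
          hence "f ys \<le> f (P l')" by (rule ys(2))
          then show False using Pl' l' by simp
        qed
      qed
    qed
    then obtain d1 where d1: "d1 > 0" "\<And>l'. l \<le> l' \<Longrightarrow> l' < l + d1 \<Longrightarrow> V l - e < V l'"
      by blast
    have "\<exists>d2>0. \<forall>l'\<in>Dom. l - d2 < l' \<and> l' \<le> l \<longrightarrow> V l' < V l + e"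
    proof (cases "\<exists>w. f w < l")
      case False
      show ?thesis
      proof (intro exI[of _ 1] conjI ballI impI)
        fix l' assume "l' \<in> Dom" "l - 1 < l' \<and> l' \<le> l"
        then obtain x where "f x \<le> l'" unfolding Dom_def K_def by blast
        hence "\<not> f x < l" using False by blast
        hence "l' = l" using \<open>f x \<le> l'\<close> \<open>l - 1 < l' \<and> l' \<le> l\<close> by linarith
        then show "V l' < V l + e" using e by simp
      qed simp
    next
      case True
      then obtain w where w: "f w < l" by blast
      define p where "p = P l"
      have pK: "f p \<le> l" using ex[OF l] unfolding p_def K_def by simp
      obtain r where r: "r > 0" "\<And>y. dist y p < r \<Longrightarrow> dist (D y) (D p) < e"
        using Dc e unfolding continuous_on_iff by blast
      define t0 where "t0 = min (1/2) (r / (norm (w - p) + 1))"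
      have "r / (norm (w - p) + 1) > 0" using r(1)
        by (simp add: add_nonneg_pos)
      hence t0: "t0 > 0" "t0 \<le> 1/2" unfolding t0_def by (auto simp: min_def)
      have t0r: "t0 * norm (w - p) < r"
      proof -
        have "t0 * norm (w - p) \<le> r / (norm (w - p) + 1) * norm (w - p)"
          unfolding t0_def by (intro mult_right_mono) auto
        also have "\<dots> < r"
        proof -
          have "r * norm (w - p) < r * (norm (w - p) + 1)" using r(1) by simp
          moreover have pos: "norm (w - p) + 1 > 0" by (simp add: add_nonneg_pos)
          ultimately show ?thesis by (simp add: pos_divide_less_eq)
        qed
        finally show ?thesis .
      qed
      show ?thesis
      proof (intro exI[of _ "t0 * (l - f w)"] conjI ballI impI)
        show "t0 * (l - f w) > 0" using t0 w by simp
        fix l' assume "l' \<in> Dom" and l': "l - t0 * (l - f w) < l' \<and> l' \<le> l"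
        define t where "t = (l - l') / (l - f w)"
        have t: "t \<ge> 0" "t < t0" using l' w unfolding t_def by (auto simp: field_simps)
        define y where "y = (1 - t) *\<^sub>R p + t *\<^sub>R w"
        have "f y \<le> (1 - t) * f p + t * f w" unfolding y_def
          by (rule convex_onD[OF fc]) (use t t0 in auto)
        also have "\<dots> \<le> (1 - t) * l + t * f w" using pK t t0 by (intro add_mono mult_left_mono) auto
        also have "\<dots> = l - t * (l - f w)" by (simp add: algebra_simps)
        also have "t * (l - f w) = l - l'" unfolding t_def using w by simp
        also have "l - (l - l') = l'" by simp
        finally have "y \<in> K l'" unfolding K_def by simp
        hence "V l' \<le> D y" using ex[OF \<open>l' \<in> Dom\<close>] by blast
        moreover have "dist y p < r"
        proof -
          have "y - p = t *\<^sub>R (w - p)" unfolding y_def by (simp add: algebra_simps)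
          hence "dist y p = t * norm (w - p)" using t by (simp add: dist_norm)
          also have "\<dots> \<le> t0 * norm (w - p)" using t by (intro mult_right_mono) auto
          finally show ?thesis using t0r by simp
        qed
        ultimately show "V l' < V l + e" using r(2)[of y] unfolding V_def p_def dist_real_def
          by linarith
      qed
    qed
    then obtain d2 where d2: "d2 > 0" "\<And>l'. l' \<in> Dom \<Longrightarrow> l - d2 < l' \<Longrightarrow> l' \<le> l \<Longrightarrow> V l' < V l + e"
      by blast
    show ?thesis
    proof (intro exI[of _ "min d1 d2"] conjI ballI impI)
      show "min d1 d2 > 0" using d1 d2 by simp
      fix l' assume "l' \<in> Dom" "\<bar>l' - l\<bar> < min d1 d2"
      show "\<bar>V l' - V l\<bar> < e"
      proof (cases "l \<le> l'")
        case True
        have "0 \<le> m / 4 * (N (P l - P l'))\<^sup>2" using m by simp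
        hence "V l' \<le> V l" using mono[OF l True] by linarith
        moreover have "l' < l + d1" using \<open>\<bar>l' - l\<bar> < min d1 d2\<close> by (simp add: abs_less_iff)
        hence "V l - e < V l'" using d1(2)[OF True] by simp
        ultimately show ?thesis by simp
      next
        case False
        have "0 \<le> m / 4 * (N (P l' - P l))\<^sup>2" using m by simp
        hence "V l \<le> V l'" using mono[OF \<open>l' \<in> Dom\<close>, of l] False by linarith
        moreover have "l - d2 < l'" using \<open>\<bar>l' - l\<bar> < min d1 d2\<close> by (simp add: abs_less_iff)
        hence "V l' < V l + e" using d2(2)[OF \<open>l' \<in> Dom\<close>] False by simp
        ultimately show ?thesis by simp
      qed
    qed
  qed
  have key: "m / 4 * (N (P l' - P l))\<^sup>2 \<le> \<bar>V l' - V l\<bar>" if "l \<in> Dom" "l' \<in> Dom" for l l'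
  proof (cases "l \<le> l'")
    case True
    have "N (P l - P l') = N (P l' - P l)" using Nb(2)[of "P l' - P l"] by simp
    hence "V l' + m / 4 * (N (P l' - P l))\<^sup>2 \<le> V l" using mono[OF that(1) True] by simp
    then show ?thesis by linarith
  next
    case False
    then show ?thesis using mono[OF that(2), of l] by linarith
  qed
  have "continuous_on Dom (\<lambda>l. N (P l - x0))"
    unfolding continuous_on_iff
  proof (intro ballI allI impI)
    fix l e assume l: "l \<in> Dom" and e: "(e::real) > 0"
    have "m / 4 * e\<^sup>2 > 0" using m e by simp
    then obtain d where d: "d > 0" "\<And>l'. l' \<in> Dom \<Longrightarrow> \<bar>l' - l\<bar> < d \<Longrightarrow> \<bar>V l' - V l\<bar> < m / 4 * e\<^sup>2"
      using Vcont[OF l] by blast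
    show "\<exists>d>0. \<forall>l'\<in>Dom. dist l' l < d \<longrightarrow> dist (N (P l' - x0)) (N (P l - x0)) < e"
    proof (intro exI[of _ d] conjI ballI impI)
      show "d > 0" by (rule d(1))
      fix l' assume l': "l' \<in> Dom" "dist l' l < d"
      have "\<bar>l' - l\<bar> < d" using l'(2) by (simp add: dist_real_def)
      hence "\<bar>V l' - V l\<bar> < m / 4 * e\<^sup>2" by (rule d(2)[OF l'(1)])
      hence "m / 4 * (N (P l' - P l))\<^sup>2 < m / 4 * e\<^sup>2"
        using key[OF l l'(1)] by linarith
      hence "(N (P l' - P l))\<^sup>2 < e\<^sup>2" by (rule mult_left_less_imp_less) (use m in simp)
      hence "N (P l' - P l) < e" by (rule power_less_imp_less_base) (use e in simp)
      moreover have "\<bar>N (P l' - x0) - N (P l - x0)\<bar> \<le> N (P l' - P l)"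
        using Nb(5)[of "P l' - x0" "P l - x0"] by simp
      ultimately show "dist (N (P l' - x0)) (N (P l - x0)) < e" by (simp add: dist_real_def)
    qed
  qed
  then show ?thesis unfolding Dom_def P_def K_def .
qed

theorem lemma4:
  fixes N :: "'a::euclidean_space \<Rightarrow> real"
    and Phi :: "'a \<Rightarrow> real"
    and f :: "'a \<Rightarrow> real"
    and x0 :: 'a
    and m M :: real
  assumes "is_norm N"
    and "convex_on UNIV Phi"
    and "\<And>y. Phi differentiable (at y)"
    and "0 < m" and "m \<le> M"
    and "\<And>x y. m / 2 * (N (x - y))\<^sup>2 \<le> bregman Phi x y"
    and "\<And>x y. bregman Phi x y \<le> M / 2 * (N (x - y))\<^sup>2"
    and "convex_on UNIV f"
  shows "continuous_on {l. {x. f x \<le> l} \<noteq> {}}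
           (\<lambda>l. N (bregman_proj Phi {x. f x \<le> l} x0 - x0))"
proof -
  define D where "D y = bregman Phi y x0" for y
  have bl: "bounded_linear (frechet_derivative Phi (at z))" for z
    using assms(3)[of z] unfolding frechet_derivative_works by (rule has_derivative_bounded_linear)
  define L where "L = frechet_derivative Phi (at x0)"
  have Ll: "bounded_linear L" unfolding L_def by (rule bl)
  have Deq: "D y = Phi y - Phi x0 - L (y - x0)" for y unfolding D_def bregman_def L_def by simp
  have Phic: "continuous_on UNIV Phi"
    by (rule differentiable_imp_continuous_on) (use assms(3) in \<open>simp add: differentiable_on_def differentiable_at_withinI\<close>)
  have Lc: "continuous_on UNIV (\<lambda>y. L (y - x0))"
    by (intro continuous_on_compose2[OF linear_continuous_on[OF Ll]] continuous_intros) auto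
  have Dc: "continuous_on UNIV D"
    unfolding Deq[abs_def] by (intro continuous_intros Phic Lc)
  have coer: "m / 2 * (N (y - x0))\<^sup>2 \<le> D y" for y unfolding D_def by (rule assms(6))
  have mid: "D ((1/2) *\<^sub>R (y1 + y2)) \<le> (D y1 + D y2) / 2 - m / 8 * (N (y1 - y2))\<^sup>2" for y1 y2
  proof -
    define z where "z = (1/2) *\<^sub>R (y1 + y2)"
    define Lz where "Lz = frechet_derivative Phi (at z)"
    have Lzl: "bounded_linear Lz" unfolding Lz_def by (rule bl)
    define a where "a = (1/2) *\<^sub>R (y1 - y2)"
    have e1: "y1 - z = a" unfolding z_def a_def by (simp add: algebra_simps) (metis field_sum_of_halves scaleR_add_left scaleR_one)
    have e2: "y2 - z = - a" unfolding z_def a_def by (simp add: algebra_simps) (metis field_sum_of_halves scaleR_add_left scaleR_one)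
    have h1: "m / 2 * (N a)\<^sup>2 \<le> Phi y1 - Phi z - Lz a"
      using assms(6)[of y1 z] e1 unfolding bregman_def Lz_def by simp
    have Lneg: "Lz (- a) = - Lz a" using Lzl by (simp add: linear_simps)
    have h2: "m / 2 * (N a)\<^sup>2 \<le> Phi y2 - Phi z + Lz a"
      using assms(6)[of y2 z] e2 Lneg nrm_basic(2)[OF assms(1), of a]
      unfolding bregman_def Lz_def by simp
    have Na: "N a = N (y1 - y2) / 2" unfolding a_def using assms(1) unfolding is_norm_def by simp
    have Na2: "m / 2 * (N a)\<^sup>2 = m / 8 * (N (y1 - y2))\<^sup>2" unfolding Na by (simp add: power2_eq_square)
    have zx: "z - x0 = (1/2) *\<^sub>R ((y1 - x0) + (y2 - x0))" unfolding z_def by (simp add: algebra_simps) (metis field_sum_of_halves scaleR_add_left scaleR_one)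
    have Lz0: "L (z - x0) = (L (y1 - x0) + L (y2 - x0)) / 2"
      unfolding zx using Ll by (simp add: linear_simps)
    have "Phi z \<le> (Phi y1 + Phi y2) / 2 - m / 8 * (N (y1 - y2))\<^sup>2"
      using h1 h2 unfolding Na2 by argo
    then show ?thesis unfolding Deq z_def[symmetric] Lz0 by (simp add: field_simps)
  qed
  have "continuous_on {l. {x. f x \<le> l} \<noteq> {}} (\<lambda>l. N (arg_min_on D {x. f x \<le> l} - x0))"
    by (rule main_abs[OF assms(1) assms(4) Dc coer mid assms(8)])
  then show ?thesis unfolding bregman_proj_def D_def[abs_def] .
qed

end
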